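(* Fix a tableau $\tau_{\bm{\lambda}}$ of shape $\bm{\lambda}\geq_{\textup{lex}}(n-2d,1^{2d})$, $\bm{\lambda}=(\lambda_1,\lambda_2,\dots)$. Then each of the following sets of polynomials has cardinality bounded by a quantity depending only on $d$ (independent of $n$): (i) the set of distinct polynomials $\textup{sym}_{\textup{hook}(\tau_{\bm{\lambda}})}(\mathsf{x}^m)$ with $\mathsf{x}^m$ ranging over square-free monomials of degree at most $d$; (ii) the set of polynomials $\mathsf{g}^{\Theta_{\tau_{\bm{\lambda}}}}_F$; (iii) the set of polynomials $\mathsf{d}^{\Theta_{\tau_{\bm{\lambda}}}}_F$; where in (ii) and (iii) $F$ ranges over $\mathcal{F}^{2d}_T$ and $T$ over intersection types with $|T|=n-\lambda_1$. (Each of these sets has span containing $W_{\tau_{\bm{\lambda}}}$.)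
   Context: Variables $\mathsf{x}_{ij}$, $1\le i<j\le n$ ($\mathsf{x}_{ji}:=\mathsf{x}_{ij}$); a square-free monomial is $\mathsf{x}^m=\prod_{i<j}\mathsf{x}_{ij}^{m_{ij}}$, $m_{ij}\in\{0,1\}$. $\mathfrak{S}_n$ acts by ring automorphisms with $\mathfrak{s}\cdot\mathsf{x}_{ij}=\mathsf{x}_{\mathfrak{s}(i)\mathfrak{s}(j)}$. $W_{\tau_{\bm{\lambda}}}$ is the subspace of the $\bm{\lambda}$-isotypic component of the $\mathfrak{S}_n$-module of square-free polynomials of degree at most $d$ (functions on $\{0,1\}^{\binom n2}$ of degree $\le d$) fixed by the row group of $\tau_{\bm{\lambda}}$. A tableau of shape $\bm{\lambda}$ is a bijective filling of the Young diagram by $1,\dots,n$; the row group $\mathfrak{R}_\tau$ is the subgroup of $\mathfrak{S}_n$ preserving each row's label set; $\textup{sym}_\tau(\mathsf{f}):=\frac{1}{|\mathfrak{R}_\tau|}\sum_{\mathfrak{s}\in\mathfrak{R}_\tau}\mathfrak{s}\cdot\mathsf{f}$. $\textup{hook}(\tau_{\bm{\lambda}})$ is the tableau of shape $(\lambda_1,1^{n-\lambda_1})$ with the same first row as $\tau_{\bm{\lambda}}$ and the remaining labels in the tail in increasing order. $\Theta_{\tau_{\bm{\lambda}}}\in\textup{Inj}([n-\lambda_1],[n])$ sends $i$ to the $i$-th smallest label not in the first row of $\tau_{\bm{\lambda}}$. $\geq_{\textup{lex}}$ is lexicographic order; $(n-2d,1^{2d})$ is the hook partition with first part $n-2d$ and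 $2d$ ones. Intersection type of size $t$: simple graph $T$ on $t$ vertices labeled bijectively by $[t]$. $T$-flag of size $f$: simple graph $F$ on $f$ vertices, $t$ labeled $1,\dots,t$ inducing a copy of $T$ with same labels; $\mathcal{F}^f_T$: such flags up to isomorphism. For $\Theta\in\textup{Inj}([t],[n])$, $\textup{Inj}_\Theta(V(F),[n])$ = injections $h:V(F)\to[n]$ with $h(v)=\Theta(i)$ for $v$ labeled $i$; $\mathsf{g}^\Theta_F:=\sum_{h\in\textup{Inj}_\Theta(V(F),[n])}\prod_{\{i,j\}\in E(F)}\mathsf{x}_{h(i)h(j)}$; $\mathsf{d}^\Theta_F:=\sum_{F'}(-1)^{|E(F')|-|E(F)|}\mathsf{g}^\Theta_{F'}$ over all simple graphs $F'$ on the same labeled vertex set as $F$ with $E(F')\supseteq E(F)$. *)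

theory Defs
  imports Complex_Main "HOL-Combinatorics.Permutations"
begin

text \<open>Vertices/labels are 1..n. The variable x_ij (i<j) is identified with the
2-set {i,j} (so x_ji = x_ij). A square-free monomial x^m is a set of such
2-sets. A square-free polynomial (real coefficients) is represented by its
coefficient function: monomial -> coefficient.\<close>

type_synonym edge = "nat set"
type_synonym monomial = "edge set"
type_synonym sqfpoly = "monomial \<Rightarrow> real"

definition edges_on :: "nat set \<Rightarrow> edge set" where
  "edges_on V = {e. \<exists>i\<in>V. \<exists>j\<in>V. i < j \<and> e = {i, j}}"

definition var_edges :: "nat \<Rightarrow> edge set" where
  "var_edges n = edges_on {1..n}"

definition mono :: "monomial \<Rightarrow> sqfpoly" where
  "mono M = (\<lambda>M'. if M' = M then 1 else 0)"

definition mon_img :: "(nat \<Rightarrow> nat) \<Rightarrow> monomial \<Rightarrow> monomial" where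
  "mon_img h M = (\<lambda>e. h ` e) ` M"

text \<open>action of a permutation s of {1..n} by ring automorphisms,
s . x_ij = x_{s(i)s(j)}; on coefficient functions this is (s.f)(M) = f(s^{-1} M).\<close>
definition act :: "(nat \<Rightarrow> nat) \<Rightarrow> sqfpoly \<Rightarrow> sqfpoly" where
  "act s f = (\<lambda>M. f (mon_img (inv s) M))"

definition is_partition :: "nat \<Rightarrow> nat list \<Rightarrow> bool" where
  "is_partition n lam \<longleftrightarrow> sorted_wrt (\<ge>) lam \<and> (\<forall>x\<in>set lam. 0 < x) \<and> sum_list lam = n"

text \<open>entries of a partition, padded with zeros (0-indexed)\<close>
definition pnth :: "nat list \<Rightarrow> nat \<Rightarrow> nat" where
  "pnth l i = (if i < length l then l ! i else 0)"

definition lex_ge :: "nat list \<Rightarrow> nat list \<Rightarrow> bool" where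
  "lex_ge l m \<longleftrightarrow> (\<forall>i. pnth l i = pnth m i) \<or>
     (\<exists>k. (\<forall>i<k. pnth l i = pnth m i) \<and> pnth m k < pnth l k)"

text \<open>A tableau is the list of its rows (each row a list of labels, left to right);
its shape is the list of row lengths.\<close>
definition shape :: "nat list list \<Rightarrow> nat list" where
  "shape tau = map length tau"

definition is_tableau :: "nat \<Rightarrow> nat list list \<Rightarrow> bool" where
  "is_tableau n tau \<longleftrightarrow> is_partition n (shape tau) \<and> distinct (concat tau)
      \<and> set (concat tau) = {1..n}"

definition row_group :: "nat \<Rightarrow> nat list list \<Rightarrow> (nat \<Rightarrow> nat) set" where
  "row_group n tau = {s. s permutes {1..n} \<and> (\<forall>r\<in>set tau. s ` set r = set r)}"

definition sym :: "nat \<Rightarrow> nat list list \<Rightarrow> sqfpoly \<Rightarrow> sqfpoly" where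
  "sym n tau f = (\<lambda>M. (1 / real (card (row_group n tau))) *
      (\<Sum>s\<in>row_group n tau. act s f M))"

definition tail_labels :: "nat \<Rightarrow> nat list list \<Rightarrow> nat list" where
  "tail_labels n tau = sorted_list_of_set ({1..n} - set (hd tau))"

definition hook :: "nat \<Rightarrow> nat list list \<Rightarrow> nat list list" where
  "hook n tau = hd tau # map (\<lambda>i. [i]) (tail_labels n tau)"

text \<open>Theta_tau : [n - lambda_1] -> [n], i |-> i-th smallest label not in the first row\<close>
definition Theta :: "nat \<Rightarrow> nat list list \<Rightarrow> nat \<Rightarrow> nat" where
  "Theta n tau i = tail_labels n tau ! (i - 1)"

definition simple_graph_on :: "nat set \<Rightarrow> edge set \<Rightarrow> bool" where
  "simple_graph_on V E \<longleftrightarrow> E \<subseteq> edges_on V"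

text \<open>Intersection type of size t: simple graph on [t] (vertex i labelled i).\<close>
definition int_type :: "nat \<Rightarrow> edge set \<Rightarrow> bool" where
  "int_type t T \<longleftrightarrow> simple_graph_on {1..t} T"

text \<open>T-flag of size f (representative of its isomorphism class): simple graph
on vertex set [f], where vertex i is labelled i for i \<le> t, and the labelled
vertices induce T with the same labels.\<close>
definition is_flag :: "nat \<Rightarrow> nat \<Rightarrow> edge set \<Rightarrow> edge set \<Rightarrow> bool" where
  "is_flag t f T F \<longleftrightarrow> t \<le> f \<and> simple_graph_on {1..f} F \<and> {e\<in>F. e \<subseteq> {1..t}} = T"

text \<open>Inj_Theta(V(F),[n]) (maps made extensional: value 0 outside V(F) = [f])\<close>
definition inj_Theta :: "nat \<Rightarrow> nat \<Rightarrow> nat \<Rightarrow> (nat \<Rightarrow> nat) \<Rightarrow> (nat \<Rightarrow> nat) set" where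
  "inj_Theta n t f Th = {h. inj_on h {1..f} \<and> h ` {1..f} \<subseteq> {1..n}
      \<and> (\<forall>i\<in>{1..t}. h i = Th i) \<and> (\<forall>v. v \<notin> {1..f} \<longrightarrow> h v = 0)}"

definition g_poly :: "nat \<Rightarrow> nat \<Rightarrow> nat \<Rightarrow> (nat \<Rightarrow> nat) \<Rightarrow> edge set \<Rightarrow> sqfpoly" where
  "g_poly n t f Th F = (\<lambda>M. \<Sum>h\<in>inj_Theta n t f Th. mono (mon_img h F) M)"

definition d_poly :: "nat \<Rightarrow> nat \<Rightarrow> nat \<Rightarrow> (nat \<Rightarrow> nat) \<Rightarrow> edge set \<Rightarrow> sqfpoly" where
  "d_poly n t f Th F = (\<lambda>M. \<Sum>F'\<in>{F'. F \<subseteq> F' \<and> simple_graph_on {1..f} F'}.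
      (-1) ^ (card F' - card F) * g_poly n t f Th F' M)"

definition set_sym :: "nat \<Rightarrow> nat \<Rightarrow> nat list list \<Rightarrow> sqfpoly set" where
  "set_sym n d tau = {sym n (hook n tau) (mono m) | m. m \<subseteq> var_edges n \<and> card m \<le> d}"

definition set_g :: "nat \<Rightarrow> nat \<Rightarrow> nat list list \<Rightarrow> sqfpoly set" where
  "set_g n d tau = (let t = n - length (hd tau) in
     {g_poly n t (2*d) (Theta n tau) F | T F. int_type t T \<and> is_flag t (2*d) T F})"

definition set_d :: "nat \<Rightarrow> nat \<Rightarrow> nat list list \<Rightarrow> sqfpoly set" where
  "set_d n d tau = (let t = n - length (hd tau) in
     {d_poly n t (2*d) (Theta n tau) F | T F. int_type t T \<and> is_flag t (2*d) T F})"

end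

theory Submission
  imports Defs
begin

lemma card_pow_bound:
  assumes "A \<subseteq> f ` Pow E" "finite E" "card E \<le> k"
  shows "finite A \<and> card A \<le> 2 ^ k"
proof -
  have fin: "finite (f ` Pow E)" using assms(2) by simp
  have "card A \<le> card (f ` Pow E)" using card_mono[OF fin assms(1)] .
  also have "\<dots> \<le> card (Pow E)" by (rule card_image_le) (use assms(2) in simp)
  also have "\<dots> = 2 ^ card E" using assms(2) by (simp add: card_Pow)
  also have "\<dots> \<le> 2 ^ k" using assms(3) by (simp add: power_increasing)
  finally show ?thesis using finite_subset[OF assms(1) fin] by simp
qed

lemma edges_on_bound:
  assumes "finite S"
  shows "finite (edges_on S) \<and> card (edges_on S) \<le> card S * card S"
proof -
  have sub: "edges_on S \<subseteq> (\<lambda>(i,j). {i,j}) ` (S \<times> S)"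
    by (auto simp: edges_on_def)
  have fin: "finite ((\<lambda>(i,j). {i,j}) ` (S \<times> S))" using assms by simp
  have "card (edges_on S) \<le> card ((\<lambda>(i,j). {i::nat,j}) ` (S \<times> S))"
    by (rule card_mono[OF fin sub])
  also have "\<dots> \<le> card (S \<times> S)" by (rule card_image_le) (use assms in simp)
  also have "\<dots> = card S * card S" by (simp add: card_cartesian_product)
  finally show ?thesis using finite_subset[OF sub fin] by simp
qed

lemma mon_img_comp: "mon_img h (mon_img g M) = mon_img (h \<circ> g) M"
  by (simp add: mon_img_def image_image image_comp)

lemma mon_img_id: "mon_img id M = M"
  by (simp add: mon_img_def)

lemma act_mono:
  assumes "bij s"
  shows "act s (mono m) = mono (mon_img s m)"
proof
  fix M
  have c1: "s \<circ> inv s = id" using assms by (metis bij_is_surj surj_iff)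
  have c2: "inv s \<circ> s = id" using assms by (simp add: bij_is_inj)
  have "(mon_img (inv s) M = m) = (M = mon_img s m)"
  proof
    assume "mon_img (inv s) M = m"
    then have "mon_img s (mon_img (inv s) M) = mon_img s m" by simp
    then show "M = mon_img s m" by (simp add: mon_img_comp c1 mon_img_id)
  next
    assume "M = mon_img s m"
    then show "mon_img (inv s) M = m" by (simp add: mon_img_comp c2 mon_img_id)
  qed
  then show "act s (mono m) M = mono (mon_img s m) M"
    by (simp add: act_def mono_def)
qed

lemma act_act:
  assumes "bij s" "bij p"
  shows "act s (act p f) = act (s \<circ> p) f"
  by (simp add: act_def mon_img_comp o_inv_distrib[OF assms])

lemma row_group_comp:
  assumes "s \<in> row_group n tau" "p \<in> row_group n tau"
  shows "s \<circ> p \<in> row_group n tau"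
proof -
  have "s \<circ> p permutes {1..n}" using assms by (simp add: row_group_def permutes_compose)
  moreover have "(s \<circ> p) ` set r = set r" if "r \<in> set tau" for r
  proof -
    have "(s \<circ> p) ` set r = s ` (p ` set r)" by (rule image_comp[symmetric])
    also have "\<dots> = set r" using assms that by (simp add: row_group_def)
    finally show ?thesis .
  qed
  ultimately show ?thesis by (simp add: row_group_def)
qed

lemma row_group_inv:
  assumes "p \<in> row_group n tau"
  shows "inv p \<in> row_group n tau"
proof -
  have pp: "p permutes {1..n}" using assms by (simp add: row_group_def)
  have "inv p ` set r = set r" if "r \<in> set tau" for r
  proof -
    have "p ` set r = set r" using assms that by (simp add: row_group_def)
    then have "inv p ` set r = inv p ` p ` set r" by simp
    also have "\<dots> = set r" by (rule image_inv_f_f) (use permutes_bij[OF pp] bij_is_inj in blast)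
    finally show ?thesis .
  qed
  then show ?thesis using permutes_inv[OF pp] by (simp add: row_group_def)
qed

lemma sym_act:
  assumes "p \<in> row_group n tau"
  shows "sym n tau (act p f) = sym n tau f"
proof
  fix M
  let ?G = "row_group n tau"
  have "p permutes {1..n}" using assms by (simp add: row_group_def)
  then have bp: "bij p" by (rule permutes_bij)
  have bb: "bij_betw (\<lambda>s. s \<circ> p) ?G ?G"
  proof (rule bij_betw_imageI)
    show "inj_on (\<lambda>s. s \<circ> p) ?G"
    proof
      fix s s' assume "s \<circ> p = s' \<circ> p"
      then have "s \<circ> p \<circ> inv p = s' \<circ> p \<circ> inv p" by simp
      moreover have "p \<circ> inv p = id" using bp by (metis bij_is_surj surj_iff)
      ultimately show "s = s'" by (simp add: o_assoc[symmetric])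
    qed
    show "(\<lambda>s. s \<circ> p) ` ?G = ?G"
    proof
      show "(\<lambda>s. s \<circ> p) ` ?G \<subseteq> ?G" using row_group_comp[OF _ assms] by blast
      show "?G \<subseteq> (\<lambda>s. s \<circ> p) ` ?G"
      proof
        fix s assume s: "s \<in> ?G"
        have "s \<circ> inv p \<in> ?G" by (rule row_group_comp[OF s row_group_inv[OF assms]])
        moreover have "s = (s \<circ> inv p) \<circ> p" using bp by (simp add: o_assoc bij_is_inj)
        ultimately show "s \<in> (\<lambda>s. s \<circ> p) ` ?G" by blast
      qed
    qed
  qed
  have "(\<Sum>s\<in>?G. act s (act p f) M) = (\<Sum>s\<in>?G. act (s \<circ> p) f M)"
    by (rule sum.cong) (auto simp: act_act bp row_group_def permutes_bij)
  also have "\<dots> = (\<Sum>s\<in>?G. act s f M)"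
    by (rule sum.reindex_bij_betw[OF bb, where g = "\<lambda>s. act s f M"])
  finally show "sym n tau (act p f) M = sym n tau f M" by (simp add: sym_def)
qed

lemma lex_bound:
  assumes "lex_ge (shape tau) ((n - 2*d) # replicate (2*d) 1)" "tau \<noteq> []"
  shows "n - length (hd tau) \<le> 2*d"
proof -
  have p0: "pnth (shape tau) 0 = length (hd tau)"
    using assms(2) by (simp add: pnth_def shape_def hd_conv_nth)
  have q0: "pnth ((n - 2*d) # replicate (2*d) 1) 0 = n - 2*d" by (simp add: pnth_def)
  have "n - 2*d \<le> length (hd tau)"
    using assms(1) unfolding lex_ge_def
  proof
    assume "\<forall>i. pnth (shape tau) i = pnth ((n - 2*d) # replicate (2*d) 1) i"
    then show ?thesis using p0 q0 by (metis order_refl)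
  next
    assume "\<exists>k. (\<forall>i<k. pnth (shape tau) i = pnth ((n - 2*d) # replicate (2*d) 1) i) \<and>
         pnth ((n - 2*d) # replicate (2*d) 1) k < pnth (shape tau) k"
    then obtain k where k: "\<forall>i<k. pnth (shape tau) i = pnth ((n - 2*d) # replicate (2*d) 1) i"
      "pnth ((n - 2*d) # replicate (2*d) 1) k < pnth (shape tau) k" by blast
    show ?thesis
    proof (cases "k = 0")
      case True then show ?thesis using k(2) p0 q0 by simp
    next
      case False then show ?thesis using k(1) p0 q0 by (metis gr0I order_refl)
    qed
  qed
  then show ?thesis by simp
qed

lemma gd_bound:
  shows "finite (set_g n d tau) \<and> card (set_g n d tau) \<le> 2 ^ (16*d*d)"
    and "finite (set_d n d tau) \<and> card (set_d n d tau) \<le> 2 ^ (16*d*d)"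
proof -
  have E: "finite (edges_on {1..2*d}) \<and> card (edges_on {1..2*d}) \<le> 16*d*d"
  proof -
    have "card (edges_on {1..2*d}) \<le> (2*d)*(2*d)" using edges_on_bound[of "{1..2*d}"] by simp
    also have "\<dots> \<le> 16*d*d" by simp
    finally show ?thesis using edges_on_bound[of "{1..2*d}"] by simp
  qed
  have "set_g n d tau \<subseteq> (\<lambda>F. g_poly n (n - length (hd tau)) (2*d) (Theta n tau) F) ` Pow (edges_on {1..2*d})"
    by (auto simp: set_g_def Let_def is_flag_def simple_graph_on_def)
  then show "finite (set_g n d tau) \<and> card (set_g n d tau) \<le> 2 ^ (16*d*d)"
    using card_pow_bound E by blast
  have "set_d n d tau \<subseteq> (\<lambda>F. d_poly n (n - length (hd tau)) (2*d) (Theta n tau) F) ` Pow (edges_on {1..2*d})"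
    by (auto simp: set_d_def Let_def is_flag_def simple_graph_on_def)
  then show "finite (set_d n d tau) \<and> card (set_d n d tau) \<le> 2 ^ (16*d*d)"
    using card_pow_bound E by blast
qed

lemma sym_bound:
  assumes tl: "card ({1..n} - set (hd tau)) \<le> 2*d"
  shows "finite (set_sym n d tau) \<and> card (set_sym n d tau) \<le> 2^(16*d*d)"
proof -
  define H where "H = hook n tau"
  define R where "R = set (hd tau) \<inter> {1..n}"
  define Tl where "Tl = {1..n} - set (hd tau)"
  have finR: "finite R" by (simp add: R_def)
  have finTl: "finite Tl" by (simp add: Tl_def)
  obtain C where C: "C \<subseteq> R" "card C = min (2*d) (card R)" "finite C"
    using obtain_subset_with_card_n[of "min (2*d) (card R)" R] by auto
  define S where "S = C \<union> Tl"
  have finS: "finite S" using C finTl by (simp add: S_def)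
  have cS: "card S \<le> 4*d"
  proof -
    have "card S \<le> card C + card Tl" by (simp add: S_def card_Un_le)
    then show ?thesis using C(2) tl by (simp add: Tl_def)
  qed
  have ES: "finite (edges_on S) \<and> card (edges_on S) \<le> 16*d*d"
  proof -
    have "card (edges_on S) \<le> card S * card S" using edges_on_bound[OF finS] by simp
    also have "\<dots> \<le> (4*d)*(4*d)" using cS by (rule mult_le_mono[OF _ cS])
    also have "\<dots> = 16*d*d" by simp
    finally show ?thesis using edges_on_bound[OF finS] by simp
  qed
  have rowsH: "set H = insert (hd tau) ((\<lambda>i. [i]) ` Tl)"
    by (simp add: H_def hook_def tail_labels_def Tl_def)
  have key: "\<exists>m'\<in>Pow (edges_on S). sym n H (mono m) = sym n H (mono m')"
    if m: "m \<subseteq> var_edges n" "card m \<le> d" for m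
  proof -
    have finm: "finite m"
      using m(1) edges_on_bound[of "{1..n}"] by (auto simp: var_edges_def intro: finite_subset)
    have edge: "\<exists>i j. i < j \<and> i \<in> {1..n} \<and> j \<in> {1..n} \<and> e = {i,j}" if "e \<in> m" for e
      using m(1) that unfolding var_edges_def edges_on_def by blast
    define V where "V = \<Union>m"
    have finV: "finite V" using finm edge by (fastforce simp: V_def)
    have "card V \<le> sum card m" unfolding V_def by (rule card_Union_le_sum_card)
    also have "\<dots> = sum (\<lambda>_. 2) m"
      by (rule sum.cong) (auto dest!: edge)
    also have "\<dots> \<le> 2*d" using m(2) by simp
    finally have cV: "card V \<le> 2*d" .
    define VR where "VR = V \<inter> R"
    have finVR: "finite VR" using finR by (simp add: VR_def)
    have "card VR \<le> card V" using finV by (simp add: VR_def card_mono)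
    moreover have "card VR \<le> card R" using finR by (simp add: VR_def card_mono)
    ultimately have cVR: "card VR \<le> card C" using cV C(2) by simp
    obtain C' where C': "C' \<subseteq> C" "card C' = card VR" "finite C'"
      using obtain_subset_with_card_n[OF cVR] by auto
    obtain f where f: "bij_betw f VR C'"
      using finite_same_card_bij[OF finVR C'(3) C'(2)[symmetric]] by auto
    have VRsub: "VR \<subseteq> R" by (simp add: VR_def)
    have C'sub: "C' \<subseteq> R" using C' C by blast
    have "card (R - VR) = card (R - C')"
      using finR VRsub C'sub C'(2) by (simp add: card_Diff_subset finite_subset)
    then obtain g where g: "bij_betw g (R - VR) (R - C')"
      using finite_same_card_bij[of "R - VR" "R - C'"] finR by auto
    define p where "p x = (if x \<in> VR then f x else if x \<in> R then g x else x)" for x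
    have b1: "bij_betw p VR C'" using f by (rule bij_betw_cong[THEN iffD1, rotated]) (simp add: p_def)
    have b2: "bij_betw p (R - VR) (R - C')" using g
      by (rule bij_betw_cong[THEN iffD1, rotated]) (simp add: p_def)
    have "bij_betw p (VR \<union> (R - VR)) (C' \<union> (R - C'))"
      by (rule bij_betw_combine[OF b1 b2]) blast
    moreover have "VR \<union> (R - VR) = R" "C' \<union> (R - C') = R" using VRsub C'sub by blast+
    ultimately have bR: "bij_betw p R R" by simp
    have pR: "p permutes R" by (rule bij_imp_permutes[OF bR]) (simp add: p_def VR_def)
    have pn: "p permutes {1..n}" using pR by (rule permutes_subset) (simp add: R_def)
    have bp: "bij p" using pn by (rule permutes_bij)
    have pid: "p x = x" if "x \<notin> R" for x using that by (simp add: p_def VR_def)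
    have pG: "p \<in> row_group n H"
    proof -
      have "p ` set r = set r" if "r \<in> set H" for r
      proof -
        from that rowsH have "r = hd tau \<or> (\<exists>i\<in>Tl. r = [i])" by auto
        then show ?thesis
        proof
          assume "r = hd tau"
          moreover have "p permutes set (hd tau)" using pR by (rule permutes_subset) (simp add: R_def)
          ultimately show ?thesis by (simp add: permutes_image)
        next
          assume "\<exists>i\<in>Tl. r = [i]"
          then obtain i where "i \<in> Tl" "r = [i]" by blast
          moreover have "i \<notin> R" using \<open>i \<in> Tl\<close> by (simp add: R_def Tl_def)
          ultimately show ?thesis using pid by simp
        qed
      qed
      then show ?thesis using pn by (simp add: row_group_def)
    qed
    have pS: "p x \<in> S" if "x \<in> V" "x \<in> {1..n}" for x
    proof (cases "x \<in> R")
      case True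
      then have "x \<in> VR" using that by (simp add: VR_def)
      then have "p x \<in> C'" using b1 by (auto simp: bij_betw_def)
      then show ?thesis using C' by (auto simp: S_def)
    next
      case False
      then have "x \<in> Tl" using that by (simp add: R_def Tl_def)
      then show ?thesis using pid False by (simp add: S_def)
    qed
    have "mon_img p m \<subseteq> edges_on S"
    proof
      fix e' assume "e' \<in> mon_img p m"
      then obtain e where e: "e \<in> m" "e' = p ` e" by (auto simp: mon_img_def)
      then obtain i j where ij: "i < j" "i \<in> {1..n}" "j \<in> {1..n}" "e = {i,j}" using edge by blast
      have "i \<in> V" "j \<in> V" using e(1) ij(4) by (auto simp: V_def)
      then have S2: "p i \<in> S" "p j \<in> S" using pS ij by auto
      have ne: "p i \<noteq> p j" using bp ij(1) by (metis bij_is_inj inj_eq less_irrefl)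
      have e'eq: "e' = {p i, p j}" using e(2) ij(4) by simp
      show "e' \<in> edges_on S"
      proof (cases "p i < p j")
        case True then show ?thesis using S2 e'eq by (auto simp: edges_on_def)
      next
        case False
        then have "p j < p i" using ne by simp
        moreover have "e' = {p j, p i}" using e'eq by auto
        ultimately show ?thesis using S2 unfolding edges_on_def by blast
      qed
    qed
    moreover have "sym n H (mono m) = sym n H (mono (mon_img p m))"
      using sym_act[OF pG, of "mono m"] act_mono[OF bp, of m] by simp
    ultimately show ?thesis by blast
  qed
  have "set_sym n d tau \<subseteq> (\<lambda>m'. sym n H (mono m')) ` Pow (edges_on S)"
  proof
    fix x assume "x \<in> set_sym n d tau"
    then obtain m where "m \<subseteq> var_edges n" "card m \<le> d" "x = sym n H (mono m)"
      by (auto simp: set_sym_def H_def)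
    then show "x \<in> (\<lambda>m'. sym n H (mono m')) ` Pow (edges_on S)" using key by blast
  qed
  then show ?thesis using card_pow_bound ES by blast
qed

theorem proposition3p21:
  fixes d :: nat
  shows "\<exists>B::nat. \<forall>n tau. is_tableau n tau \<and>
            lex_ge (shape tau) ((n - 2*d) # replicate (2*d) 1) \<longrightarrow>
          (finite (set_sym n d tau) \<and> card (set_sym n d tau) \<le> B) \<and>
          (finite (set_g n d tau) \<and> card (set_g n d tau) \<le> B) \<and>
          (finite (set_d n d tau) \<and> card (set_d n d tau) \<le> B)"
proof (intro exI allI impI)
  fix n tau
  assume a: "is_tableau n tau \<and> lex_ge (shape tau) ((n - 2*d) # replicate (2*d) 1)"
  have "card ({1..n} - set (hd tau)) \<le> 2*d"
  proof (cases "tau = []")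
    case True
    then have "n = 0" using a by (simp add: is_tableau_def)
    then show ?thesis by simp
  next
    case False
    have "hd tau \<in> set tau" using False by simp
    then have sub: "set (hd tau) \<subseteq> {1..n}" and dist: "distinct (hd tau)"
      using a by (auto simp: is_tableau_def distinct_concat_iff)
    have "card ({1..n} - set (hd tau)) = n - length (hd tau)"
      using sub dist by (simp add: card_Diff_subset finite_subset distinct_card)
    then show ?thesis using lex_bound[OF conjunct2[OF a] False] by simp
  qed
  then show "(finite (set_sym n d tau) \<and> card (set_sym n d tau) \<le> 2^(16*d*d)) \<and>
          (finite (set_g n d tau) \<and> card (set_g n d tau) \<le> 2^(16*d*d)) \<and>
          (finite (set_d n d tau) \<and> card (set_d n d tau) \<le> 2^(16*d*d))"
    using sym_bound gd_bound by blast
qed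

end
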